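(* Let $\mathfrak g$ be a real Lie algebra with a nice basis $\{e_1,\dots,e_n\}$, with root matrix $M_\Delta$ and its mod 2 reduction $M_{\Delta,2}$. Let $D=(d_1,\dots,d_n)\in\mathbb Z^n$, let $\delta\in(\mathbb Z_2)^n$ be its mod 2 reduction, and let $\mathfrak g_D=\operatorname{Span}_{\mathbb R}\mathcal B_D\subset\mathfrak g^{\mathbb C}$, where $\mathcal B_D=\{i^{d_1}e_1,\dots,i^{d_n}e_n\}$. Then: (a) if $M_{\Delta,2}\delta=0$, then $\mathfrak g_D$ is a real Lie subalgebra of $\mathfrak g^{\mathbb C}$ and $\mathcal B_D$ is a nice basis of it; in particular $\mathfrak g$ and $\mathfrak g_D$ have the same root matrix; (b) if $\delta$ is the mod 2 reduction of some $D'\in\mathbb Z^n$ with $M_\Delta D'=0$, then $\mathfrak g_D$ is isomorphic to $\mathfrak g$ as a nice Lie algebra; (c) conversely, if $\mathfrak g_D$ is a real Lie subalgebra of $\mathfrak g^{\mathbb C}$, then $M_{\Delta,2}\delta=0$.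
   Context: A nice basis of a Lie algebra $\mathfrak g$ is a basis $\{e_1,\dots,e_n\}$ (dual basis $\{e^i\}$) such that each $[e_i,e_j]$ is a multiple of some $e_k$ and each $e_i\lrcorner\, de^j$ is a multiple of some $e^k$ ($d$ the Chevalley–Eilenberg differential). The root matrix $M_\Delta$ has one row for each triple $(\{i,j\},k)$ such that $[e_i,e_j]$ is a nonzero multiple of $e_k$, with $+1$ in position $k$, $-1$ in positions $i$ and $j$, and $0$ elsewhere. $\mathfrak g^{\mathbb C}$ is the complexification, $i=\sqrt{-1}$. Two nice Lie algebras are isomorphic as nice Lie algebras if there is a Lie algebra isomorphism mapping each element of one nice basis to a nonzero multiple of an element of the other. *)

theory Defs
  imports "HOL-Analysis.Analysis"
begin

text \<open>A real Lie algebra g with basis e_1..e_n (indexed by a finite type 'n) is given by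
  its real structure constants c: [e_i,e_j] = sum_k c i j k e_k.  Its complexification
  g^C is complex^'n with the complex-bilinear extension of the bracket; g sits inside g^C
  as the real span of the standard basis vectors.  All spans/subspaces/independence below
  are over the reals (scaleR).\<close>

definition lie_constants :: "('n::finite \<Rightarrow> 'n \<Rightarrow> 'n \<Rightarrow> real) \<Rightarrow> bool" where
  "lie_constants c \<longleftrightarrow>
     (\<forall>i j k. c i j k = - c j i k) \<and>
     (\<forall>i j l m. (\<Sum>k\<in>UNIV. c i j k * c k l m + c j l k * c k i m + c l i k * c k j m) = 0)"

definition cbr :: "('n::finite \<Rightarrow> 'n \<Rightarrow> 'n \<Rightarrow> real) \<Rightarrow> complex^'n \<Rightarrow> complex^'n \<Rightarrow> complex^'n" where
  "cbr c x y = (\<chi> m. \<Sum>i\<in>UNIV. \<Sum>j\<in>UNIV. x$i * y$j * complex_of_real (c i j m))"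

definition std_basis :: "'n::finite \<Rightarrow> complex^'n" where
  "std_basis k = axis k 1"

definition real_form :: "(complex^'n::finite) set" where
  "real_form = span (range std_basis)"

definition real_lie_subalgebra :: "(complex^'n::finite \<Rightarrow> complex^'n \<Rightarrow> complex^'n) \<Rightarrow> (complex^'n) set \<Rightarrow> bool" where
  "real_lie_subalgebra br V \<longleftrightarrow> subspace V \<and> (\<forall>x\<in>V. \<forall>y\<in>V. br x y \<in> V)"

text \<open>Nice basis b of the real Lie algebra V (bracket br):
  b is a real basis of V; each [b_i,b_j] is a (real) multiple of some b_k; and each
  b_i \<lrcorner> d b^j is a multiple of some b^k, i.e. (since (b_i \<lrcorner> d b^j)(b_l) = - b^j([b_i,b_l]))
  there is k such that the b_j-coordinate of [b_i,b_l] vanishes for all l \<noteq> k.\<close>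
definition nice_basis :: "(complex^'n::finite \<Rightarrow> complex^'n \<Rightarrow> complex^'n) \<Rightarrow> (complex^'n) set \<Rightarrow> ('n \<Rightarrow> complex^'n) \<Rightarrow> bool" where
  "nice_basis br V b \<longleftrightarrow>
     inj b \<and> independent (range b) \<and> span (range b) = V \<and>
     (\<forall>i j. \<exists>k. \<exists>r::real. br (b i) (b j) = r *\<^sub>R b k) \<and>
     (\<forall>i j. \<exists>k. \<forall>l. l \<noteq> k \<longrightarrow> br (b i) (b l) \<in> span (b ` (UNIV - {j})))"

text \<open>Index set of the rows of the root matrix: triples (i,j,k) with [b_i,b_j] a nonzero
  multiple of b_k (stored as ordered pairs; (i,j,k) and (j,i,k) give the same row).\<close>
definition roots :: "(complex^'n::finite \<Rightarrow> complex^'n \<Rightarrow> complex^'n) \<Rightarrow> ('n \<Rightarrow> complex^'n) \<Rightarrow> ('n \<times> 'n \<times> 'n) set" where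
  "roots br b = {(i,j,k). \<exists>r::real. r \<noteq> 0 \<and> br (b i) (b j) = r *\<^sub>R b k}"

definition root_row :: "'n \<Rightarrow> 'n \<Rightarrow> 'n \<Rightarrow> 'n \<Rightarrow> int" where
  "root_row i j k l = (if l = k then 1 else 0) - (if l = i then 1 else 0) - (if l = j then 1 else 0)"

definition root_kernel :: "('n::finite \<times> 'n \<times> 'n) set \<Rightarrow> ('n \<Rightarrow> int) \<Rightarrow> bool" where
  "root_kernel R D \<longleftrightarrow> (\<forall>(i,j,k)\<in>R. (\<Sum>l\<in>UNIV. root_row i j k l * D l) = 0)"

text \<open>M_{\<Delta>,2} \<delta> = 0, with \<delta> \<in> (Z_2)^n represented by 0/1 values.\<close>
definition root_kernel_mod2 :: "('n::finite \<times> 'n \<times> 'n) set \<Rightarrow> ('n \<Rightarrow> int) \<Rightarrow> bool" where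
  "root_kernel_mod2 R \<delta> \<longleftrightarrow> (\<forall>(i,j,k)\<in>R. even (\<Sum>l\<in>UNIV. root_row i j k l * \<delta> l))"

definition mod2 :: "('n \<Rightarrow> int) \<Rightarrow> ('n \<Rightarrow> int)" where
  "mod2 D = (\<lambda>l. D l mod 2)"

definition BD :: "('n::finite \<Rightarrow> int) \<Rightarrow> 'n \<Rightarrow> complex^'n" where
  "BD D k = axis k (\<i> powi D k)"

definition gD :: "('n::finite \<Rightarrow> int) \<Rightarrow> (complex^'n) set" where
  "gD D = span (range (BD D))"

definition nice_iso :: "(complex^'n::finite \<Rightarrow> complex^'n \<Rightarrow> complex^'n) \<Rightarrow> (complex^'n) set \<Rightarrow> ('n \<Rightarrow> complex^'n)
    \<Rightarrow> (complex^'n) set \<Rightarrow> ('n \<Rightarrow> complex^'n) \<Rightarrow> bool" where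
  "nice_iso br V b W b' \<longleftrightarrow>
    (\<exists>f. bij_betw f V W \<and>
         (\<forall>x\<in>V. \<forall>y\<in>V. \<forall>s t::real. f (s *\<^sub>R x + t *\<^sub>R y) = s *\<^sub>R f x + t *\<^sub>R f y) \<and>
         (\<forall>x\<in>V. \<forall>y\<in>V. f (br x y) = br (f x) (f y)) \<and>
         (\<forall>k. \<exists>l. \<exists>r::real. r \<noteq> 0 \<and> f (b k) = r *\<^sub>R b' l))"

end

theory Submission
  imports Defs
begin

lemma ipow_nz[simp]: "\<i> powi n \<noteq> 0"
  by (simp add: power_int_eq_0_iff)

lemma ipow_even: "even (n::int) \<Longrightarrow> \<i> powi n = of_real ((-1) powi (n div 2))"
proof -
  assume "even n"
  then have n: "n = 2 * (n div 2)" by simp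
  have "\<i> powi n = (\<i> powi 2) powi (n div 2)"
    by (subst n, rule power_int_mult)
  also have "\<i> powi 2 = (-1::complex)" by (simp add: power_int_def)
  finally show ?thesis by simp
qed

lemma ipow_real_iff: "(\<i> powi n \<in> \<real>) = even (n::int)"
proof
  assume "even n" then show "\<i> powi n \<in> \<real>" by (metis Reals_of_real ipow_even)
next
  assume r: "\<i> powi n \<in> \<real>"
  show "even n"
  proof (rule ccontr)
    assume "odd n"
    then have "even (n - 1)" by simp
    have "\<i> powi n = \<i> powi (n - 1) * \<i> powi 1"
      using power_int_add[of \<i> "n-1" 1] by simp
    also have "\<dots> = of_real ((-1) powi ((n-1) div 2)) * \<i>"
      using ipow_even[OF \<open>even (n-1)\<close>] by simp
    finally have e: "\<i> powi n = of_real ((-1) powi ((n-1) div 2)) * \<i>" .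
    have nz: "((-1::real) powi ((n-1) div 2)) \<noteq> 0" by (simp add: power_int_eq_0_iff)
    have "\<i> = \<i> powi n / of_real ((-1) powi ((n-1) div 2))"
      using e nz by simp
    also have "\<dots> \<in> \<real>" by (rule Reals_divide[OF r Reals_of_real])
    finally show False by (simp add: complex_is_Real_iff)
  qed
qed

lemma ipow_add: "\<i> powi (a + b) = \<i> powi a * \<i> powi b"
  by (simp add: power_int_add)

lemma ipow_diff: "\<i> powi (a - b) = \<i> powi a / \<i> powi b"
  by (simp add: power_int_diff)

lemma root_row_sum: fixes F :: "'n::finite \<Rightarrow> int" shows "(\<Sum>l\<in>UNIV. root_row i j k l * F l) = F k - F i - F j"
proof -
  have "(\<Sum>l\<in>UNIV. root_row i j k l * F l) = (\<Sum>l\<in>UNIV. (if l = k then F l else 0) - (if l = i then F l else 0) - (if l = j then F l else 0))"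
    by (rule sum.cong) (auto simp: root_row_def algebra_simps)
  also have "\<dots> = F k - F i - F j"
    by (simp add: sum_subtractf)
  finally show ?thesis .
qed

lemma cbr_axis: "cbr c (axis i a) (axis j b) = (\<chi> m. a * b * of_real (c i j m))"
proof -
  have "\<And>m ib ja. axis i a $ ib * axis j b $ ja * of_real (c ib ja m) = (if ib = i then (if ja = j then a * b * of_real (c i j m) else 0) else 0)"
    by (simp add: axis_def)
  moreover have "\<And>m ib. (\<Sum>ja\<in>UNIV. (if ib = i then (if ja = j then a * b * of_real (c i j m) else 0) else 0)) = (if ib = i then a * b * of_real (c i j m) else 0)"
    by auto
  ultimately show ?thesis by (simp add: cbr_def vec_eq_iff)
qed

lemma span_coord_zero: "x \<in> span S \<Longrightarrow> (\<forall>v\<in>S. v$j = 0) \<Longrightarrow> x$j = (0::complex)"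
  by (erule span_induct) (auto simp: subspace_def)

lemma gD_char: "gD D = {x. \<forall>k. x$k / \<i> powi D k \<in> \<real>}"
proof
  show "gD D \<subseteq> {x. \<forall>k. x$k / \<i> powi D k \<in> \<real>}"
  proof
    fix x assume "x \<in> gD D"
    then have "x \<in> span (range (BD D))" by (simp add: gD_def)
    then have "\<forall>k. x$k / \<i> powi D k \<in> \<real>"
    proof (rule span_induct)
      show "subspace {x. \<forall>k. x$k / \<i> powi D k \<in> \<real>}"
      proof -
        have "\<And>(r::real) (x::complex^'a) k. (r *\<^sub>R x)$k / \<i> powi D k = of_real r * (x$k / \<i> powi D k)"
          by (simp only: vector_scaleR_component) (simp add: scaleR_conv_of_real)
        then show ?thesis by (auto simp: subspace_def add_divide_distrib) (metis Reals_mult Reals_of_real times_divide_eq_right)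
      qed
    next
      fix v assume "v \<in> range (BD D)"
      then show "\<forall>k. v$k / \<i> powi D k \<in> \<real>"
        by (auto simp: BD_def axis_def)
    qed
    then show "x \<in> {x. \<forall>k. x$k / \<i> powi D k \<in> \<real>}" by simp
  qed
next
  show "{x. \<forall>k. x$k / \<i> powi D k \<in> \<real>} \<subseteq> gD D"
  proof
    fix x assume x: "x \<in> {x. \<forall>k. x$k / \<i> powi D k \<in> \<real>}"
    have "(\<Sum>k\<in>UNIV. Re (x$k / \<i> powi D k) *\<^sub>R BD D k) \<in> span (range (BD D))"
      by (intro span_sum span_scale span_base) auto
    moreover have "(\<Sum>k\<in>UNIV. Re (x$k / \<i> powi D k) *\<^sub>R BD D k) = x"
    proof (subst vec_eq_iff, intro allI)
      fix m
      have "(\<Sum>k\<in>UNIV. Re (x$k / \<i> powi D k) *\<^sub>R BD D k) $ m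
          = Re (x$m / \<i> powi D m) *\<^sub>R \<i> powi D m"
        by (simp add: sum_component BD_def axis_def if_distrib sum.delta cong: if_cong)
      also have "\<dots> = x$m"
        using x of_real_Re[of "x$m / \<i> powi D m"] by (simp add: scaleR_conv_of_real)
      finally show "(\<Sum>k\<in>UNIV. Re (x$k / \<i> powi D k) *\<^sub>R BD D k) $ m = x$m" .
    qed
    ultimately show "x \<in> gD D" by (simp add: gD_def)
  qed
qed

lemma real_form_gD: "real_form = gD (\<lambda>_. 0)"
  by (simp add: real_form_def gD_def BD_def std_basis_def)

lemma parity_mod2:
  fixes D :: "'n::finite \<Rightarrow> int"
  shows "even (\<Sum>l\<in>UNIV. root_row i j k l * mod2 D l) = even (D i + D j - D k)"
proof -
  have "(\<Sum>l\<in>UNIV. root_row i j k l * mod2 D l) = D k mod 2 - D i mod 2 - D j mod 2"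
    by (simp add: root_row_sum mod2_def)
  moreover have "D k mod 2 - D i mod 2 - D j mod 2 = - (D i + D j - D k) + 2 * (D i div 2 + D j div 2 - D k div 2)"
    by (simp add: minus_mult_div_eq_mod[symmetric] algebra_simps)
  ultimately show ?thesis by auto
qed

lemma term_real:
  assumes "a \<in> \<real>" "b \<in> \<real>" "even (p + q - r)"
  shows "(a * \<i> powi p) * (b * \<i> powi q) * of_real cc / \<i> powi r \<in> \<real>"
proof -
  have e: "\<i> powi (p + q - r) = \<i> powi p * \<i> powi q / \<i> powi r"
    by (simp only: power_int_diff power_int_add complex_i_not_zero simp_thms)
  have "(a * \<i> powi p) * (b * \<i> powi q) * of_real cc / \<i> powi r
      = a * b * of_real cc * \<i> powi (p + q - r)"
    by (subst e) (simp add: mult_ac times_divide_eq_right)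
  also have "\<dots> \<in> \<real>"
    using assms ipow_real_iff[of "p+q-r"] by (intro Reals_mult Reals_of_real) auto
  finally show ?thesis .
qed

theorem proposition1p12:
  fixes c :: "'n::finite \<Rightarrow> 'n \<Rightarrow> 'n \<Rightarrow> real" and D :: "'n \<Rightarrow> int"
  assumes "lie_constants c"
    and "nice_basis (cbr c) real_form std_basis"
  shows "(root_kernel_mod2 (roots (cbr c) std_basis) (mod2 D) \<longrightarrow>
            real_lie_subalgebra (cbr c) (gD D) \<and> nice_basis (cbr c) (gD D) (BD D) \<and>
            roots (cbr c) (BD D) = roots (cbr c) std_basis)
       \<and> ((\<exists>D'. mod2 D' = mod2 D \<and> root_kernel (roots (cbr c) std_basis) D') \<longrightarrow>
            nice_iso (cbr c) real_form std_basis (gD D) (BD D))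
       \<and> (real_lie_subalgebra (cbr c) (gD D) \<longrightarrow>
            root_kernel_mod2 (roots (cbr c) std_basis) (mod2 D))"
proof -
  have nb: "\<forall>i j. \<exists>k. \<exists>r::real. cbr c (std_basis i) (std_basis j) = r *\<^sub>R std_basis k"
    and nd: "\<forall>i j. \<exists>k. \<forall>l. l \<noteq> k \<longrightarrow> cbr c (std_basis i) (std_basis l) \<in> span (std_basis ` (UNIV - {j}))"
    using assms(2) by (auto simp: nice_basis_def)
  have cbr_std: "cbr c (std_basis i) (std_basis j) = (\<chi> m. of_real (c i j m))" for i j
    by (simp add: std_basis_def cbr_axis)
  have S1: "\<exists>k. \<forall>m. m \<noteq> k \<longrightarrow> c i j m = 0" for i j
  proof -
    obtain k r where "cbr c (std_basis i) (std_basis j) = r *\<^sub>R std_basis k" using nb by blast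
    then have eq: "(\<chi> m. (of_real (c i j m) :: complex)) = r *\<^sub>R std_basis k"
      unfolding cbr_std .
    have "(of_real (c i j m) :: complex) = (r *\<^sub>R std_basis k) $ m" for m
      using eq by (metis vec_lambda_beta)
    then have "(of_real (c i j m) :: complex) = 0" if "m \<noteq> k" for m
      using that by (simp add: std_basis_def axis_def)
    then show ?thesis by auto
  qed
  have S2: "\<exists>k. \<forall>l. l \<noteq> k \<longrightarrow> c i l j = 0" for i j
  proof -
    obtain k where k: "\<forall>l. l \<noteq> k \<longrightarrow> cbr c (std_basis i) (std_basis l) \<in> span (std_basis ` (UNIV - {j}))"
      using nd by blast
    have "c i l j = 0" if "l \<noteq> k" for l
    proof -
      have "cbr c (std_basis i) (std_basis l) $ j = 0"
        using span_coord_zero[OF k[rule_format, OF that], of j] by (auto simp: std_basis_def axis_def)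
      then show ?thesis by (simp add: cbr_std)
    qed
    then show ?thesis by blast
  qed
  have R: "(i, j, k) \<in> roots (cbr c) std_basis \<longleftrightarrow> c i j k \<noteq> 0" for i j k
  proof
    assume "(i, j, k) \<in> roots (cbr c) std_basis"
    then obtain r where "r \<noteq> 0" "cbr c (std_basis i) (std_basis j) = r *\<^sub>R std_basis k"
      by (auto simp: roots_def)
    have eq: "(\<chi> m. (of_real (c i j m) :: complex)) = r *\<^sub>R std_basis k"
      using \<open>cbr c (std_basis i) (std_basis j) = r *\<^sub>R std_basis k\<close> unfolding cbr_std .
    have "(of_real (c i j k) :: complex) = (r *\<^sub>R std_basis k) $ k"
      using eq by (metis vec_lambda_beta)
    then have "(of_real (c i j k) :: complex) = r *\<^sub>R 1"
      by (simp add: std_basis_def axis_def)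
    then show "c i j k \<noteq> 0" using \<open>r \<noteq> 0\<close> by (simp add: scaleR_conv_of_real)
  next
    assume ne: "c i j k \<noteq> 0"
    obtain k' where k': "\<forall>m. m \<noteq> k' \<longrightarrow> c i j m = 0" using S1 by blast
    with ne have "k' = k" by metis
    have "cbr c (std_basis i) (std_basis j) = c i j k *\<^sub>R std_basis k"
      unfolding cbr_std vec_eq_iff using k' \<open>k' = k\<close> by (auto simp: std_basis_def axis_def of_real_def)
    then show "(i, j, k) \<in> roots (cbr c) std_basis" using ne by (auto simp: roots_def)
  qed
  have cbr_BD: "cbr c (BD D i) (BD D j) = (\<chi> m. \<i> powi D i * \<i> powi D j * of_real (c i j m))" for i j
    by (simp add: BD_def cbr_axis)

  have sc: "\<And>(r::real) (z::complex). r *\<^sub>R z = of_real r * z" by (simp add: scaleR_conv_of_real)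
  have e3: "\<i> powi (a + b - d) = \<i> powi a * \<i> powi b / \<i> powi d" for a b d
    by (simp only: power_int_diff power_int_add complex_i_not_zero simp_thms)
  have e4: "\<i> powi (a - d) = \<i> powi a / \<i> powi d" for a d
    by (simp only: power_int_diff complex_i_not_zero simp_thms)
  have BDin: "BD D k \<in> gD D" for k by (simp add: gD_def span_base)
  have A: "real_lie_subalgebra (cbr c) (gD D) \<and> nice_basis (cbr c) (gD D) (BD D) \<and>
            roots (cbr c) (BD D) = roots (cbr c) std_basis"
    if P: "root_kernel_mod2 (roots (cbr c) std_basis) (mod2 D)"
  proof -
    have par: "even (D i + D j - D k)" if "c i j k \<noteq> 0" for i j k
    proof -
      have "(i, j, k) \<in> roots (cbr c) std_basis" using that R by blast
      then have "even (\<Sum>l\<in>UNIV. root_row i j k l * mod2 D l)"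
        using P unfolding root_kernel_mod2_def by blast
      then show ?thesis by (simp add: parity_mod2)
    qed
    have BDbr: "\<exists>k r. cbr c (BD D i) (BD D j) = r *\<^sub>R BD D k \<and> (\<forall>m. m \<noteq> k \<longrightarrow> c i j m = 0) \<and> (r \<noteq> 0 \<longleftrightarrow> c i j k \<noteq> 0)" for i j
    proof -
      obtain k where k: "\<forall>m. m \<noteq> k \<longrightarrow> c i j m = 0" using S1 by blast
      show ?thesis
      proof (cases "c i j k = 0")
        case True
        then have "\<forall>m. c i j m = 0" using k by metis
        then have "cbr c (BD D i) (BD D j) = 0 *\<^sub>R BD D k" by (simp add: cbr_BD vec_eq_iff)
        then show ?thesis using k True by blast
      next
        case False
        define s where "s = ((-1::real) powi ((D i + D j - D k) div 2))"
        have ev: "even (D i + D j - D k)" using par False by blast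
        have s0: "s \<noteq> 0" by (simp add: s_def power_int_eq_0_iff)
        have "\<i> powi (D i + D j - D k) = of_real s" unfolding s_def by (rule ipow_even[OF ev])
        then have e2: "\<i> powi D i * \<i> powi D j = of_real s * \<i> powi D k"
          unfolding e3 by (simp add: divide_eq_eq)
        have "cbr c (BD D i) (BD D j) = (s * c i j k) *\<^sub>R BD D k"
          unfolding cbr_BD vec_eq_iff
        proof
          fix m show "(\<chi> m. \<i> powi D i * \<i> powi D j * of_real (c i j m)) $ m = ((s * c i j k) *\<^sub>R BD D k) $ m"
            using k unfolding vec_lambda_beta vector_scaleR_component by (cases "m = k") (simp_all add: BD_def axis_def e2 sc mult_ac)
        qed
        then show ?thesis using k False s0 by (intro exI[of _ k] exI[of _ "s * c i j k"]) auto
      qed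
    qed
    have closure: "cbr c x y \<in> gD D" if "x \<in> gD D" "y \<in> gD D" for x y
    proof -
      have xr: "\<forall>k. x$k / \<i> powi D k \<in> \<real>" using that(1) by (simp add: gD_char)
      have yr: "\<forall>k. y$k / \<i> powi D k \<in> \<real>" using that(2) by (simp add: gD_char)
      have tr: "x$i' * y$j' * of_real (c i' j' m) / \<i> powi D m \<in> \<real>" for i' j' m
      proof (cases "c i' j' m = 0")
        case True then show ?thesis by simp
      next
        case False
        have "x$i' * y$j' * of_real (c i' j' m) / \<i> powi D m
           = ((x$i' / \<i> powi D i') * \<i> powi D i') * ((y$j' / \<i> powi D j') * \<i> powi D j') * of_real (c i' j' m) / \<i> powi D m"
          by simp
        also have "\<dots> \<in> \<real>"
          using xr yr par[OF False] by (intro term_real) auto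
        finally show ?thesis .
      qed
      have "(cbr c x y)$m / \<i> powi D m \<in> \<real>" for m
        unfolding cbr_def vec_lambda_beta sum_divide_distrib using tr by (intro sum_in_Reals) auto
      then show ?thesis by (simp add: gD_char)
    qed
    have rl: "real_lie_subalgebra (cbr c) (gD D)"
      unfolding real_lie_subalgebra_def using closure by (simp add: gD_def subspace_span)
    have inj: "inj (BD D)" by (auto simp: inj_def BD_def axis_eq_axis)
    have z: "0 \<notin> range (BD D)"
    proof
      assume "0 \<in> range (BD D)"
      then obtain k where "0 = BD D k" by auto
      then have "(0::complex^'n) $ k = BD D k $ k" by simp
      then show False by (simp add: BD_def axis_def)
    qed
    have po: "pairwise orthogonal (range (BD D))"
      by (auto simp: pairwise_def orthogonal_def BD_def inner_axis_axis)
    have ind: "independent (range (BD D))" by (rule pairwise_orthogonal_independent[OF po z])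
    have dual: "\<exists>k. \<forall>l. l \<noteq> k \<longrightarrow> cbr c (BD D i) (BD D l) \<in> span (BD D ` (UNIV - {j}))" for i j
    proof -
      obtain k where k: "\<forall>l. l \<noteq> k \<longrightarrow> c i l j = 0" using S2 by blast
      have "cbr c (BD D i) (BD D l) \<in> span (BD D ` (UNIV - {j}))" if "l \<noteq> k" for l
      proof -
        obtain k' r where kr: "cbr c (BD D i) (BD D l) = r *\<^sub>R BD D k'" "\<forall>m. m \<noteq> k' \<longrightarrow> c i l m = 0" "r \<noteq> 0 \<longleftrightarrow> c i l k' \<noteq> 0"
          using BDbr by blast
        show ?thesis
        proof (cases "r = 0")
          case True then show ?thesis using kr by (simp add: span_zero)
        next
          case False
          then have "k' \<noteq> j" using kr k that by auto
          then have "BD D k' \<in> span (BD D ` (UNIV - {j}))" by (intro span_base) auto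
          then show ?thesis using kr by (simp add: span_scale)
        qed
      qed
      then show ?thesis by blast
    qed
    have nbD: "nice_basis (cbr c) (gD D) (BD D)"
    proof -
      have "\<exists>k r. cbr c (BD D i) (BD D j) = r *\<^sub>R BD D k" for i j using BDbr by meson
      then show ?thesis unfolding nice_basis_def using inj ind dual by (auto simp: gD_def)
    qed
    have RB: "(a, b, k) \<in> roots (cbr c) (BD D) \<longleftrightarrow> c a b k \<noteq> 0" for a b k
    proof
      assume "(a, b, k) \<in> roots (cbr c) (BD D)"
      then obtain r where r: "r \<noteq> 0" "cbr c (BD D a) (BD D b) = r *\<^sub>R BD D k"
        by (auto simp: roots_def)
      then have "cbr c (BD D a) (BD D b) $ k = (r *\<^sub>R BD D k) $ k" by simp
      then have "\<i> powi D a * \<i> powi D b * of_real (c a b k) = of_real r * \<i> powi D k"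
        unfolding cbr_BD by (simp add: BD_def axis_def sc)
      then show "c a b k \<noteq> 0" using r(1) by auto
    next
      assume ne: "c a b k \<noteq> 0"
      obtain k' r where kr: "cbr c (BD D a) (BD D b) = r *\<^sub>R BD D k'" "\<forall>m. m \<noteq> k' \<longrightarrow> c a b m = 0" "r \<noteq> 0 \<longleftrightarrow> c a b k' \<noteq> 0"
        using BDbr by blast
      have "k' = k" using kr(2) ne by metis
      then show "(a, b, k) \<in> roots (cbr c) (BD D)" using kr ne by (auto simp: roots_def)
    qed
    have "roots (cbr c) (BD D) = roots (cbr c) std_basis"
    proof (rule set_eqI)
      fix t show "t \<in> roots (cbr c) (BD D) \<longleftrightarrow> t \<in> roots (cbr c) std_basis"
        by (cases t) (simp add: RB R)
    qed
    then show ?thesis using rl nbD by blast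
  qed
  have C: "root_kernel_mod2 (roots (cbr c) std_basis) (mod2 D)"
    if sub: "real_lie_subalgebra (cbr c) (gD D)"
    unfolding root_kernel_mod2_def
  proof (clarify)
    fix i j k assume "(i, j, k) \<in> roots (cbr c) std_basis"
    then have ne: "c i j k \<noteq> 0" using R by blast
    have "cbr c (BD D i) (BD D j) \<in> gD D" using sub BDin unfolding real_lie_subalgebra_def by blast
    then have "cbr c (BD D i) (BD D j) $ k / \<i> powi D k \<in> \<real>" by (simp add: gD_char)
    then have "\<i> powi D i * \<i> powi D j * of_real (c i j k) / \<i> powi D k \<in> \<real>" by (simp add: cbr_BD)
    moreover have "\<i> powi D i * \<i> powi D j * of_real (c i j k) / \<i> powi D k = of_real (c i j k) * \<i> powi (D i + D j - D k)"
      unfolding e3 by simp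
    ultimately have "of_real (c i j k) * \<i> powi (D i + D j - D k) \<in> \<real>" by simp
    then have "of_real (c i j k) * \<i> powi (D i + D j - D k) / of_real (c i j k) \<in> \<real>"
      by (rule Reals_divide[OF _ Reals_of_real])
    then have "\<i> powi (D i + D j - D k) \<in> \<real>" using ne by simp
    then have "even (D i + D j - D k)" by (simp add: ipow_real_iff)
    then show "even (\<Sum>l\<in>UNIV. root_row i j k l * mod2 D l)" by (simp add: parity_mod2)
  qed
  have B: "nice_iso (cbr c) real_form std_basis (gD D) (BD D)"
    if ex: "\<exists>D'. mod2 D' = mod2 D \<and> root_kernel (roots (cbr c) std_basis) D'"
  proof -
    obtain D' where D': "mod2 D' = mod2 D" "root_kernel (roots (cbr c) std_basis) D'" using ex by blast
    have K: "D' m = D' i + D' j" if "c i j m \<noteq> 0" for i j m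
    proof -
      have mem: "(i, j, m) \<in> roots (cbr c) std_basis" using that R by blast
      have "(\<lambda>(a, b, d). (\<Sum>l\<in>UNIV. root_row a b d l * D' l) = 0) (i, j, m)"
        using bspec[OF D'(2)[unfolded root_kernel_def] mem] .
      then have "(\<Sum>l\<in>UNIV. root_row i j m l * D' l) = 0" by simp
      then show ?thesis by (simp add: root_row_sum)
    qed
    have Pm: "even (D' k - D k)" for k
    proof -
      have "D' k mod 2 = D k mod 2" using D'(1) by (simp add: mod2_def fun_eq_iff)
      then show ?thesis by (simp add: mod_eq_dvd_iff)
    qed
    have Pm': "even (D k - D' k)" for k using Pm[of k] by (simp add: dvd_diff_commute)
    define f where "f x = (\<chi> k. x$k * \<i> powi D' k)" for x :: "complex^'n"
    have rf: "real_form = {x::complex^'n. \<forall>k. x$k \<in> \<real>}"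
      by (simp add: real_form_gD gD_char)
    have inj: "inj_on f real_form" by (auto simp: inj_on_def f_def vec_eq_iff)
    have img: "f ` real_form = gD D"
    proof
      show "f ` real_form \<subseteq> gD D"
      proof
        fix y assume "y \<in> f ` real_form"
        then obtain x where x: "\<forall>k. x$k \<in> \<real>" "y = f x" using rf by auto
        have "y$k / \<i> powi D k \<in> \<real>" for k
        proof -
          have "y$k / \<i> powi D k = x$k * \<i> powi (D' k - D k)" using x(2) unfolding e4 by (simp add: f_def)
          also have "\<dots> \<in> \<real>" using x(1) Pm ipow_real_iff by (intro Reals_mult) auto
          finally show ?thesis .
        qed
        then show "y \<in> gD D" by (simp add: gD_char)
      qed
    next
      show "gD D \<subseteq> f ` real_form"
      proof
        fix y assume "y \<in> gD D"
        then have yr: "\<forall>k. y$k / \<i> powi D k \<in> \<real>" by (simp add: gD_char)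
        define x where "x = (\<chi> k. y$k / \<i> powi D' k)"
        have "x$k \<in> \<real>" for k
        proof -
          have "x$k = (y$k / \<i> powi D k) * \<i> powi (D k - D' k)" unfolding e4 x_def by simp
          also have "\<dots> \<in> \<real>" using yr Pm' ipow_real_iff by (intro Reals_mult) auto
          finally show ?thesis .
        qed
        then have "x \<in> real_form" unfolding rf by blast
        moreover have "y = f x" by (simp add: f_def x_def vec_eq_iff)
        ultimately show "y \<in> f ` real_form" by blast
      qed
    qed
    have lin: "f (s *\<^sub>R x + t *\<^sub>R y) = s *\<^sub>R f x + t *\<^sub>R f y" for s t x y
      by (simp add: f_def vec_eq_iff sc algebra_simps)
    have br: "f (cbr c x y) = cbr c (f x) (f y)" for x y
    proof -
      have "(\<Sum>i\<in>UNIV. \<Sum>j\<in>UNIV. x$i * y$j * of_real (c i j m)) * \<i> powi D' m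
          = (\<Sum>i\<in>UNIV. \<Sum>j\<in>UNIV. (x$i * \<i> powi D' i) * (y$j * \<i> powi D' j) * of_real (c i j m))" for m
        unfolding sum_distrib_right
      proof (intro sum.cong refl)
        fix i j
        show "x$i * y$j * of_real (c i j m) * \<i> powi D' m = (x$i * \<i> powi D' i) * (y$j * \<i> powi D' j) * of_real (c i j m)"
        proof (cases "c i j m = 0")
          case True then show ?thesis by simp
        next
          case False
          then have "\<i> powi D' m = \<i> powi D' i * \<i> powi D' j" using K[OF False] by (simp add: ipow_add)
          then show ?thesis by (simp add: mult_ac)
        qed
      qed
      then show ?thesis by (simp add: f_def cbr_def vec_eq_iff)
    qed
    have nice: "\<exists>l. \<exists>r::real. r \<noteq> 0 \<and> f (std_basis k) = r *\<^sub>R BD D l" for k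
    proof -
      define r where "r = ((-1::real) powi ((D' k - D k) div 2))"
      have r0: "r \<noteq> 0" by (simp add: r_def power_int_eq_0_iff)
      have "\<i> powi (D' k - D k) = of_real r" unfolding r_def by (rule ipow_even[OF Pm])
      then have e2: "\<i> powi D' k = of_real r * \<i> powi D k"
        unfolding e4 by (simp add: divide_eq_eq)
      have "f (std_basis k) = r *\<^sub>R BD D k"
        unfolding vec_eq_iff
      proof
        fix m show "f (std_basis k) $ m = (r *\<^sub>R BD D k) $ m"
          unfolding vector_scaleR_component by (cases "m = k") (simp_all add: f_def std_basis_def BD_def axis_def sc e2)
      qed
      then show ?thesis using r0 by blast
    qed
    show ?thesis unfolding nice_iso_def bij_betw_def
      using inj img lin br nice by (intro exI[of _ f]) simp
  qed
  show ?thesis using A B C by blast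
qed

end
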